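(* Let $G$ be a finite simple graph with $|E(G)| \le 2|V(G)| - 1$ and minimum degree $\delta(G) \ge 2$. Then there exists a vertex $v$ of $G$, with $k = \deg(v)$, such that at least one of the following holds: (B1) $k = 2$; (B2) $k = 3$ and at least two neighbours of $v$ have degree at most $4$; (B3) $k = 5$ and at least three neighbours of $v$ have degree at most $3$; (B4) $k = 6$ and at least five neighbours of $v$ have degree at most $3$; (B5) $k \ge 7$ and all $k$ neighbours of $v$ have degree at most $3$. *)

theory Defs
  imports Main
begin

definition finite_simple_graph :: "'a set \<Rightarrow> 'a set set \<Rightarrow> bool" where
  "finite_simple_graph V E \<longleftrightarrow> finite V \<and> (\<forall>e\<in>E. e \<subseteq> V \<and> card e = 2)"

definition neighbours :: "'a set set \<Rightarrow> 'a \<Rightarrow> 'a set" where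
  "neighbours E v = {u. {u, v} \<in> E}"

definition degree :: "'a set set \<Rightarrow> 'a \<Rightarrow> nat" where
  "degree E v = card (neighbours E v)"

end

theory Submission
  imports Defs
begin

lemma nb_sub:
  assumes "finite_simple_graph V E"
  shows "neighbours E v \<subseteq> V"
  using assms unfolding finite_simple_graph_def neighbours_def by auto

lemma deg_card_edges:
  assumes "finite_simple_graph V E"
  shows "degree E v = card {e\<in>E. v\<in>e}"
proof -
  have "bij_betw (\<lambda>u. {u,v}) (neighbours E v) {e\<in>E. v\<in>e}"
  proof (rule bij_betwI')
    fix x y assume "x \<in> neighbours E v" "y \<in> neighbours E v"
    show "({x, v} = {y, v}) = (x = y)" by (auto simp: doubleton_eq_iff)
  next
    fix x assume "x \<in> neighbours E v"
    then show "{x, v} \<in> {e \<in> E. v \<in> e}" by (auto simp: neighbours_def)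
  next
    fix e assume e: "e \<in> {e \<in> E. v \<in> e}"
    then have "card e = 2" using assms unfolding finite_simple_graph_def by auto
    then obtain a b where ab: "e = {a,b}" "a \<noteq> b" by (auto simp: card_2_iff)
    show "\<exists>x\<in>neighbours E v. e = {x, v}"
    proof (cases "v = a")
      case True
      then show ?thesis using e ab by (auto simp: neighbours_def insert_commute intro!: bexI[of _ b])
    next
      case False
      then have "v = b" using e ab by auto
      then show ?thesis using e ab by (auto simp: neighbours_def intro!: bexI[of _ a])
    qed
  qed
  then show ?thesis unfolding degree_def by (rule bij_betw_same_card)
qed

lemma card_filter_sum:
  assumes "finite A"
  shows "card {x\<in>A. P x} = (\<Sum>x\<in>A. if P x then 1 else 0)"
proof -
  have "card {x\<in>A. P x} = (\<Sum>x\<in>{x\<in>A. P x}. 1)" by simp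
  also have "\<dots> = (\<Sum>x\<in>A. if P x then 1 else 0)" by (rule sum.inter_filter[OF assms])
  finally show ?thesis .
qed

lemma handshake:
  assumes "finite_simple_graph V E"
  shows "(\<Sum>v\<in>V. degree E v) = 2 * card E"
proof -
  have fV: "finite V" using assms by (simp add: finite_simple_graph_def)
  have "E \<subseteq> Pow V" using assms by (auto simp: finite_simple_graph_def)
  then have fE: "finite E" using fV finite_subset by blast
  have "(\<Sum>v\<in>V. degree E v) = (\<Sum>v\<in>V. \<Sum>e\<in>E. if v \<in> e then 1 else 0)"
    using fE by (simp add: deg_card_edges[OF assms] card_filter_sum)
  also have "\<dots> = (\<Sum>e\<in>E. \<Sum>v\<in>V. if v \<in> e then 1 else 0)" by (rule sum.swap)
  also have "\<dots> = (\<Sum>e\<in>E. 2)"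
  proof (rule sum.cong)
    fix e assume "e \<in> E"
    then have "e \<subseteq> V" "card e = 2" using assms by (auto simp: finite_simple_graph_def)
    moreover have "{v\<in>V. v \<in> e} = e" using \<open>e \<subseteq> V\<close> by auto
    ultimately show "(\<Sum>v\<in>V. if v \<in> e then 1 else 0) = (2::nat)"
      using fV by (simp add: card_filter_sum[symmetric])
  qed simp
  finally show ?thesis by simp
qed

theorem lemma4:
  fixes V :: "'a set" and E :: "'a set set"
  assumes "finite_simple_graph V E" and "V \<noteq> {}"
    and "card E \<le> 2 * card V - 1"
    and "\<forall>v\<in>V. degree E v \<ge> 2"
  shows "\<exists>v\<in>V. let k = degree E v in
           k = 2
         \<or> (k = 3 \<and> card {u \<in> neighbours E v. degree E u \<le> 4} \<ge> 2)
         \<or> (k = 5 \<and> card {u \<in> neighbours E v. degree E u \<le> 3} \<ge> 3)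
         \<or> (k = 6 \<and> card {u \<in> neighbours E v. degree E u \<le> 3} \<ge> 5)
         \<or> (k \<ge> 7 \<and> (\<forall>u \<in> neighbours E v. degree E u \<le> 3))"
proof (rule ccontr)
  assume neg: "\<not> ?thesis"
  define d where "d = degree E"
  define N where "N = neighbours E"
  have fV: "finite V" using assms(1) by (simp add: finite_simple_graph_def)
  have NV: "\<And>v. N v \<subseteq> V" unfolding N_def using nb_sub[OF assms(1)] .
  have fN: "\<And>v. finite (N v)" using NV fV finite_subset by blast
  have dN: "\<And>v. d v = card (N v)" by (simp add: d_def N_def degree_def)
  have nv: "\<And>v. v \<in> V \<Longrightarrow> \<not> (d v = 2
         \<or> (d v = 3 \<and> card {u \<in> N v. d u \<le> 4} \<ge> 2)
         \<or> (d v = 5 \<and> card {u \<in> N v. d u \<le> 3} \<ge> 3)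
         \<or> (d v = 6 \<and> card {u \<in> N v. d u \<le> 3} \<ge> 5)
         \<or> (d v \<ge> 7 \<and> (\<forall>u \<in> N v. d u \<le> 3)))"
    using neg unfolding d_def N_def Let_def by blast
  have ge3: "\<And>v. v \<in> V \<Longrightarrow> d v \<ge> 3"
  proof -
    fix v assume v: "v \<in> V"
    have "d v \<ge> 2" using assms(4) v unfolding d_def by blast
    moreover have "d v \<noteq> 2" using nv[OF v] by blast
    ultimately show "d v \<ge> 3" by linarith
  qed
  have n3: "\<And>v. v \<in> V \<Longrightarrow> d v = 3 \<Longrightarrow> card {u \<in> N v. d u \<le> 4} \<le> 1"
  proof - fix v assume "v \<in> V" "d v = 3" then show "card {u \<in> N v. d u \<le> 4} \<le> 1"
    using nv[of v] by linarith qed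
  have n5: "\<And>v. v \<in> V \<Longrightarrow> d v = 5 \<Longrightarrow> card {u \<in> N v. d u \<le> 3} \<le> 2"
  proof - fix v assume "v \<in> V" "d v = 5" then show "card {u \<in> N v. d u \<le> 3} \<le> 2"
    using nv[of v] by linarith qed
  have n6: "\<And>v. v \<in> V \<Longrightarrow> d v = 6 \<Longrightarrow> card {u \<in> N v. d u \<le> 3} \<le> 4"
  proof - fix v assume "v \<in> V" "d v = 6" then show "card {u \<in> N v. d u \<le> 3} \<le> 4"
    using nv[of v] by linarith qed
  have n7: "\<And>v. v \<in> V \<Longrightarrow> d v \<ge> 7 \<Longrightarrow> \<exists>u\<in>N v. \<not> d u \<le> 3"
    using nv by blast
  define S where "S = {v\<in>V. d v = 3}"
  define B where "B = {v\<in>V. d v \<ge> 5}"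
  define c where "c v = (if v \<in> B then int (card {u\<in>S. {u,v} \<in> E}) else 0)
       - (if v \<in> S then int (card {u\<in>B. {u,v} \<in> E}) else 0)" for v
  have NE: "\<And>v. N v = {u. {u,v} \<in> E}" by (simp add: N_def neighbours_def)
  have filtS: "\<And>v. {u\<in>S. {u,v} \<in> E} = {u\<in>N v. d u \<le> 3}"
    using NV ge3 unfolding S_def NE by fastforce
  have filtB: "\<And>v. {u\<in>B. {u,v} \<in> E} = {u\<in>N v. \<not> d u \<le> 4}"
    using NV unfolding B_def NE by fastforce
  have loc: "2 * int (d v) - 8 \<ge> c v" if v: "v \<in> V" for v
  proof -
    consider "d v = 3" | "d v = 4" | "d v = 5" | "d v = 6" | "d v \<ge> 7"
      using ge3[OF v] by linarith
    then show ?thesis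
    proof cases
      case 1
      have "card (N v) = card {u \<in> N v. d u \<le> 4} + card {u\<in>N v. \<not> d u \<le> 4}"
      proof -
        have e: "{u \<in> N v. d u \<le> 4} \<union> {u\<in>N v. \<not> d u \<le> 4} = N v" by auto
        have "card ({u \<in> N v. d u \<le> 4} \<union> {u\<in>N v. \<not> d u \<le> 4}) = card {u \<in> N v. d u \<le> 4} + card {u\<in>N v. \<not> d u \<le> 4}"
          using fN[of v] by (intro card_Un_disjoint) auto
        then show ?thesis unfolding e .
      qed
      then have "card {u\<in>B. {u,v} \<in> E} \<ge> 2" using n3[OF v 1] 1 dN filtB by simp
      then show ?thesis using 1 v unfolding c_def S_def B_def by auto
    next
      case 2 then show ?thesis unfolding c_def S_def B_def by auto
    next
      case 3 then show ?thesis using n5[OF v 3] filtS[of v] v unfolding c_def S_def B_def by auto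
    next
      case 4 then show ?thesis using n6[OF v 4] filtS[of v] v unfolding c_def S_def B_def by auto
    next
      case 5
      obtain u where u: "u \<in> N v" "\<not> d u \<le> 3" using n7[OF v 5] by blast
      have "{u\<in>N v. d u \<le> 3} \<subseteq> N v - {u}" using u by auto
      then have "card {u\<in>N v. d u \<le> 3} \<le> card (N v) - 1"
      proof -
        have "card {u\<in>N v. d u \<le> 3} \<le> card (N v - {u})"
          by (rule card_mono) (use fN[of v] \<open>{u\<in>N v. d u \<le> 3} \<subseteq> N v - {u}\<close> in auto)
        also have "\<dots> = card (N v) - 1" using u(1) fN[of v] by simp
        finally show ?thesis .
      qed
      then show ?thesis using 5 v filtS[of v] dN[of v] unfolding c_def S_def B_def by auto
    qed
  qed
  have fS: "finite S" "finite B" using fV unfolding S_def B_def by auto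
  have csum: "(\<Sum>v\<in>V. c v) = 0"
  proof -
    have SB: "S \<subseteq> V" "B \<subseteq> V" unfolding S_def B_def by auto
    have "(\<Sum>v\<in>V. c v) = (\<Sum>v\<in>B. int (card {u\<in>S. {u,v} \<in> E})) - (\<Sum>v\<in>S. int (card {u\<in>B. {u,v} \<in> E}))"
      unfolding c_def using fV SB by (simp add: sum_subtractf sum.If_cases Int_absorb1 Int_absorb2)
    also have "(\<Sum>v\<in>B. int (card {u\<in>S. {u,v} \<in> E})) = (\<Sum>v\<in>B. \<Sum>u\<in>S. if {u,v} \<in> E then 1 else 0)"
      using fS by (auto simp: card_filter_sum of_nat_sum intro!: sum.cong)
    also have "\<dots> = (\<Sum>u\<in>S. \<Sum>v\<in>B. if {u,v} \<in> E then 1 else 0)" by (rule sum.swap)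
    also have "\<dots> = (\<Sum>u\<in>S. int (card {v\<in>B. {v,u} \<in> E}))"
      using fS by (auto simp: card_filter_sum of_nat_sum insert_commute intro!: sum.cong)
    finally show ?thesis by simp
  qed
  have "(\<Sum>v\<in>V. c v) \<le> (\<Sum>v\<in>V. 2 * int (d v) - 8)" using loc by (rule sum_mono)
  also have "\<dots> = 2 * int (\<Sum>v\<in>V. d v) - 8 * int (card V)"
    by (simp add: sum_subtractf sum_distrib_left)
  also have "(\<Sum>v\<in>V. d v) = 2 * card E" unfolding d_def by (rule handshake[OF assms(1)])
  finally have "8 * int (card V) \<le> 4 * int (card E)" using csum by simp
  moreover have "card V \<ge> 1" using fV assms(2) by (simp add: Suc_le_eq card_gt_0_iff)
  ultimately show False using assms(3) by linarith
qed

end
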